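(* Let $f:\mathbb{R}^n\to\mathbb{R}$ be a convex, continuously differentiable function with locally Lipschitz gradient, with $\mathcal{X}^*:=\arg\min f\neq\emptyset$ and optimal value $f^*$, and assume $f$ is locally strongly convex. Let $x^0$ be such that $\Lambda(x^0):=\{x:f(x)\le f(x^0)\}$ is bounded; let $r:=\max\{\|x\|:x\in\Lambda(x^0)\}$, $\Omega:=\overline{B}(0;5r)$, let $L_\Omega>0$ satisfy $\|\nabla f(x)-\nabla f(y)\|\le L_\Omega\|x-y\|$ on $\Omega$, and let $\mu_\Omega:=\inf_{x,y\in\Omega,x\neq y}\frac{\langle\nabla f(y)-\nabla f(x),y-x\rangle}{\|y-x\|^2}$; assume $\mu_\Omega<L_\Omega$. Let $(x^k)$ be generated by $x^{k+1}=x^k-\alpha_k\nabla f(x^k)$ with $\alpha_k\in[\bar\alpha,1/L_\Omega]$, where $0<\bar\alpha<1/L_\Omega$. Let $x^*$ be an optimal solution, $q_0:=\frac{2\bar\alpha\mu_\Omega L_\Omega}{\mu_\Omega+L_\Omega}$, $q_1:=\frac{\mu_\Omega^2\bar\alpha^2}{4}$. Then: (a) $\|x^{k+1}-x^*\|^2\le(1-q_0)\|x^k-x^*\|^2$ and $f(x^{k+1})-f^*\le(1-q_1)(f(x^k)-f^* )$ for all $k\in\mathbb{N}_0$; i.e. $(\|x^k-x^*\|)$ and $(f(x^k)-f^* )$ converge Q-linearly to $0$ with rates $\sqrt{1-q_0}$ and $1-q_1$; (b) $\|\nabla f(x^k)\|\le\frac{\sqrt2 L_\Omega}{\sqrt{\mu_\Omega}}(f(x^0)-f^*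 )^{1/2}(1-q_1)^{k/2}$ for all $k\in\mathbb{N}_0$.
   Context: $f$ is locally strongly convex if every $x$ has $\delta_x>0$, $\mu_x>0$ such that $f(y)\ge f(z)+\langle\nabla f(z),y-z\rangle+\frac{\mu_x}{2}\|y-z\|^2$ for all $y,z\in B(x;\delta_x)$. Here $\Omega$ is the set $\overline B(0;(1+2(1+\nu)^{1/\nu})r)$ with $\nu=1$. *)

theory Defs
  imports "HOL-Analysis.Analysis"
begin

definition loc_strongly_convex :: "('a::euclidean_space \<Rightarrow> real) \<Rightarrow> ('a \<Rightarrow> 'a) \<Rightarrow> bool" where
  "loc_strongly_convex f g \<longleftrightarrow>
     (\<forall>x. \<exists>\<delta>>0. \<exists>\<mu>>0. \<forall>y\<in>ball x \<delta>. \<forall>z\<in>ball x \<delta>.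
        f y \<ge> f z + inner (g z) (y - z) + \<mu> / 2 * (norm (y - z))\<^sup>2)"

definition loc_lipschitz_map :: "('a::metric_space \<Rightarrow> 'b::metric_space) \<Rightarrow> bool" where
  "loc_lipschitz_map g \<longleftrightarrow>
     (\<forall>x. \<exists>\<delta>>0. \<exists>K. \<forall>y\<in>ball x \<delta>. \<forall>z\<in>ball x \<delta>. dist (g y) (g z) \<le> K * dist y z)"

end

theory Submission
  imports Defs
begin


lemma line_deriv:
  fixes f :: "'a::real_inner \<Rightarrow> real"
  assumes grad: "\<And>y. GDERIV f y :> g y"
  shows "((\<lambda>t. f (u + t *\<^sub>R d)) has_real_derivative inner (g (u + t *\<^sub>R d)) d) (at t)"
proof -
  have l: "((\<lambda>t. u + t *\<^sub>R d) has_derivative (\<lambda>s. s *\<^sub>R d)) (at t)"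
    by (auto intro!: derivative_eq_intros)
  have "(f has_derivative (\<lambda>h. inner h (g (u + t *\<^sub>R d)))) (at (u + t *\<^sub>R d))"
    using grad[of "u + t *\<^sub>R d"] by (simp add: gderiv_def)
  from has_derivative_compose[OF l this]
  have "((\<lambda>t. f (u + t *\<^sub>R d)) has_derivative (\<lambda>s. inner (s *\<^sub>R d) (g (u + t *\<^sub>R d)))) (at t)"
    by (simp add: o_def)
  then show ?thesis
    by (simp add: has_field_derivative_def inner_commute mult.commute[of _ "inner d _"])
qed

lemma quad_upper:
  fixes f :: "'a::real_inner \<Rightarrow> real"
  assumes grad: "\<And>y. GDERIV f y :> g y"
    and H: "\<And>t. 0 \<le> t \<Longrightarrow> t \<le> 1 \<Longrightarrow> inner (g (x + t *\<^sub>R (z - x)) - g x) (z - x) \<le> c * t * (norm (z - x))\<^sup>2"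
  shows "f z \<le> f x + inner (g x) (z - x) + c / 2 * (norm (z - x))\<^sup>2"
proof -
  define h where "h t = f (x + t *\<^sub>R (z - x)) - t * inner (g x) (z - x) - c / 2 * t\<^sup>2 * (norm (z - x))\<^sup>2" for t
  have "h 0 \<ge> h 1"
  proof (rule DERIV_nonpos_imp_nonincreasing[of 0 1 h])
    fix t :: real assume t: "0 \<le> t" "t \<le> 1"
    have "(h has_real_derivative (inner (g (x + t *\<^sub>R (z - x))) (z - x) - inner (g x) (z - x) - c * t * (norm (z - x))\<^sup>2)) (at t)"
      unfolding h_def
      using line_deriv[OF grad, of x "z - x" t]
      by (auto intro!: derivative_eq_intros simp: algebra_simps)
    moreover have "inner (g (x + t *\<^sub>R (z - x))) (z - x) - inner (g x) (z - x) - c * t * (norm (z - x))\<^sup>2 \<le> 0"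
      using H[OF t] by (simp add: inner_diff_left)
    ultimately show "\<exists>y. (h has_real_derivative y) (at t) \<and> y \<le> 0" by blast
  qed simp
  then show ?thesis by (simp add: h_def)
qed

lemma quad_lower:
  fixes f :: "'a::real_inner \<Rightarrow> real"
  assumes grad: "\<And>y. GDERIV f y :> g y"
    and H: "\<And>t. 0 \<le> t \<Longrightarrow> t \<le> 1 \<Longrightarrow> inner (g (x + t *\<^sub>R (z - x)) - g x) (z - x) \<ge> c * t * (norm (z - x))\<^sup>2"
  shows "f z \<ge> f x + inner (g x) (z - x) + c / 2 * (norm (z - x))\<^sup>2"
proof -
  define h where "h t = f (x + t *\<^sub>R (z - x)) - t * inner (g x) (z - x) - c / 2 * t\<^sup>2 * (norm (z - x))\<^sup>2" for t
  have "h 0 \<le> h 1"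
  proof (rule DERIV_nonneg_imp_nondecreasing[of 0 1 h])
    fix t :: real assume t: "0 \<le> t" "t \<le> 1"
    have "(h has_real_derivative (inner (g (x + t *\<^sub>R (z - x))) (z - x) - inner (g x) (z - x) - c * t * (norm (z - x))\<^sup>2)) (at t)"
      unfolding h_def
      using line_deriv[OF grad, of x "z - x" t]
      by (auto intro!: derivative_eq_intros simp: algebra_simps)
    moreover have "inner (g (x + t *\<^sub>R (z - x))) (z - x) - inner (g x) (z - x) - c * t * (norm (z - x))\<^sup>2 \<ge> 0"
      using H[OF t] by (simp add: inner_diff_left)
    ultimately show "\<exists>y. (h has_real_derivative y) (at t) \<and> y \<ge> 0" by blast
  qed simp
  then show ?thesis by (simp add: h_def)
qed

lemma convex_grad_ineq:
  fixes f :: "'a::real_inner \<Rightarrow> real"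
  assumes grad: "\<And>y. GDERIV f y :> g y" and cvx: "convex_on UNIV f"
  shows "f v \<ge> f u + inner (g u) (v - u)"
proof -
  define \<phi> where "\<phi> t = f (u + t *\<^sub>R (v - u))" for t
  have c: "convex_on UNIV \<phi>"
  proof (rule convex_onI)
    fix s a b :: real assume s: "0 < s" "s < 1"
    have e: "u + ((1 - s) *\<^sub>R a + s *\<^sub>R b) *\<^sub>R (v - u) = (1 - s) *\<^sub>R (u + a *\<^sub>R (v - u)) + s *\<^sub>R (u + b *\<^sub>R (v - u))"
      by (simp add: algebra_simps)
    show "\<phi> ((1 - s) *\<^sub>R a + s *\<^sub>R b) \<le> (1 - s) * \<phi> a + s * \<phi> b"
      unfolding \<phi>_def e using convex_onD[OF cvx, of s] s by simp
  qed simp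
  have d: "(\<phi> has_field_derivative inner (g u) (v - u)) (at 0 within UNIV)"
    unfolding \<phi>_def using line_deriv[OF grad, of u "v - u" 0] by simp
  have "\<phi> 1 - \<phi> 0 \<ge> inner (g u) (v - u) * (1 - 0)"
    by (rule convex_on_imp_above_tangent[OF c _ _ _ d]) auto
  then show ?thesis by (simp add: \<phi>_def)
qed

lemma grad_mono:
  fixes f :: "'a::real_inner \<Rightarrow> real"
  assumes grad: "\<And>y. GDERIV f y :> g y" and cvx: "convex_on UNIV f"
  shows "inner (g v - g u) (v - u) \<ge> 0"
proof -
  have "f v \<ge> f u + inner (g u) (v - u)" "f u \<ge> f v + inner (g v) (u - v)"
    using convex_grad_ineq[OF grad cvx] by auto
  then show ?thesis by (simp add: inner_diff_left inner_diff_right inner_commute)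
qed

lemma cocoerc_step:
  fixes \<psi> :: "'a::real_inner \<Rightarrow> real"
  assumes lower: "\<And>u w. u \<in> S \<Longrightarrow> w \<in> S \<Longrightarrow> \<psi> w \<ge> \<psi> u + inner (d u) (w - u)"
    and upper: "\<And>u w. u \<in> S \<Longrightarrow> w \<in> S \<Longrightarrow> \<psi> w \<le> \<psi> u + inner (d u) (w - u) + l / 2 * (norm (w - u))\<^sup>2"
    and xS: "x \<in> S" and yS: "y \<in> S"
    and G: "G = d x - d y"
    and z1: "x - t *\<^sub>R G \<in> S" and z2: "y + t *\<^sub>R G \<in> S"
  shows "(2 * t - l * t\<^sup>2) * (norm G)\<^sup>2 \<le> inner G (x - y)"
proof -
  have 1: "\<psi> (x - t *\<^sub>R G) \<ge> \<psi> y + inner (d y) ((x - t *\<^sub>R G) - y)" using lower[OF yS z1] .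
  have 2: "\<psi> (x - t *\<^sub>R G) \<le> \<psi> x + inner (d x) ((x - t *\<^sub>R G) - x) + l / 2 * (norm ((x - t *\<^sub>R G) - x))\<^sup>2"
    using upper[OF xS z1] .
  have 3: "\<psi> (y + t *\<^sub>R G) \<ge> \<psi> x + inner (d x) ((y + t *\<^sub>R G) - x)" using lower[OF xS z2] .
  have 4: "\<psi> (y + t *\<^sub>R G) \<le> \<psi> y + inner (d y) ((y + t *\<^sub>R G) - y) + l / 2 * (norm ((y + t *\<^sub>R G) - y))\<^sup>2"
    using upper[OF yS z2] .
  have n: "(norm (x - t *\<^sub>R G - x))\<^sup>2 = t\<^sup>2 * (norm G)\<^sup>2" "(norm (y + t *\<^sub>R G - y))\<^sup>2 = t\<^sup>2 * (norm G)\<^sup>2"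
    by (simp_all add: power_mult_distrib)
  have gg: "inner G G = (norm G)\<^sup>2" by (simp add: power2_norm_eq_inner)
  have i1: "inner G x - inner G y = inner (d x) x - inner (d x) y - inner (d y) x + inner (d y) y"
    unfolding G by (simp add: inner_diff_left inner_diff_right inner_commute)
  have i2: "t * inner (d x) G - t * inner (d y) G = t * (norm G)\<^sup>2"
    unfolding gg[symmetric] unfolding G by (simp add: inner_diff_left inner_diff_right inner_commute algebra_simps)
  from 1 2 3 4 n have "G \<bullet> y + t * (2 * (norm G)\<^sup>2) \<le> G \<bullet> x + l * (t\<^sup>2 * (norm G)\<^sup>2)"
    apply (simp add: inner_diff_right inner_add_right algebra_simps)
    using i1 i2 by (simp add: inner_commute algebra_simps)
  then show ?thesis by (simp add: inner_diff_right algebra_simps power2_eq_square)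
qed

lemma unif_pos:
  fixes f :: "'a::euclidean_space \<Rightarrow> real"
  assumes grad: "\<And>y. GDERIV f y :> g y" and cvx: "convex_on UNIV f"
    and lsc: "loc_strongly_convex f g" and R: "R > 0"
  shows "\<exists>m>0. \<forall>u\<in>cball 0 R. \<forall>v\<in>cball 0 R. inner (g v - g u) (v - u) \<ge> m * (norm (v - u))\<^sup>2"
proof -
  have loc: "\<forall>x. \<exists>\<delta>>0. \<exists>\<mu>>0. \<forall>y\<in>ball x \<delta>. \<forall>z\<in>ball x \<delta>. inner (g y - g z) (y - z) \<ge> \<mu> * (norm (y - z))\<^sup>2"
  proof
    fix x
    obtain \<delta> \<mu> where d: "\<delta> > 0" "\<mu> > 0" and H: "\<forall>y\<in>ball x \<delta>. \<forall>z\<in>ball x \<delta>.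
        f y \<ge> f z + inner (g z) (y - z) + \<mu> / 2 * (norm (y - z))\<^sup>2"
      using lsc unfolding loc_strongly_convex_def by metis
    have "\<forall>y\<in>ball x \<delta>. \<forall>z\<in>ball x \<delta>. inner (g y - g z) (y - z) \<ge> \<mu> * (norm (y - z))\<^sup>2"
    proof (intro ballI)
      fix y z assume yz: "y \<in> ball x \<delta>" "z \<in> ball x \<delta>"
      have a: "f y \<ge> f z + inner (g z) (y - z) + \<mu> / 2 * (norm (y - z))\<^sup>2" using H yz by blast
      have b: "f z \<ge> f y + inner (g y) (z - y) + \<mu> / 2 * (norm (z - y))\<^sup>2" using H yz by blast
      have "norm (z - y) = norm (y - z)" by (rule norm_minus_commute)
      with a b show "inner (g y - g z) (y - z) \<ge> \<mu> * (norm (y - z))\<^sup>2"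
        by (simp add: inner_diff_left inner_diff_right inner_commute)
    qed
    with d show "\<exists>\<delta>>0. \<exists>\<mu>>0. \<forall>y\<in>ball x \<delta>. \<forall>z\<in>ball x \<delta>. inner (g y - g z) (y - z) \<ge> \<mu> * (norm (y - z))\<^sup>2"
      by blast
  qed
  then obtain \<delta> where \<delta>: "\<And>x. \<delta> x > 0" and
    \<delta>': "\<And>x. \<exists>\<mu>>0. \<forall>y\<in>ball x (\<delta> x). \<forall>z\<in>ball x (\<delta> x). inner (g y - g z) (y - z) \<ge> \<mu> * (norm (y - z))\<^sup>2"
    by metis
  then obtain \<mu>l where \<mu>l: "\<And>x. \<mu>l x > 0" and
    \<mu>l': "\<And>x y z. y\<in>ball x (\<delta> x) \<Longrightarrow> z\<in>ball x (\<delta> x) \<Longrightarrow> inner (g y - g z) (y - z) \<ge> \<mu>l x * (norm (y - z))\<^sup>2"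
    by metis
  define K where "K = cball (0::'a) R"
  obtain C' where C': "C' \<subseteq> K" "finite C'" "K \<subseteq> (\<Union>c\<in>C'. ball c (\<delta> c / 2))"
    by (rule compactE_image[of K K "\<lambda>c. ball c (\<delta> c / 2)"]) (use \<delta> in \<open>auto simp: K_def\<close>)
  have "0 \<in> K" using R by (simp add: K_def)
  then have ne: "C' \<noteq> {}" using C' by blast
  define \<epsilon> where "\<epsilon> = Min ((\<lambda>c. \<delta> c / 2) ` C')"
  define m1 where "m1 = Min (\<mu>l ` C')"
  have \<epsilon>: "\<epsilon> > 0" unfolding \<epsilon>_def using C' ne \<delta> by (simp add: Min_gr_iff)
  have m1: "m1 > 0" unfolding m1_def using C' ne \<mu>l by (simp add: Min_gr_iff)
  have U: "inner (g w - g u) (w - u) \<ge> m1 * (norm (w - u))\<^sup>2"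
    if u: "u \<in> K" and w: "w \<in> K" and uw: "dist u w < \<epsilon>" for u w
  proof -
    obtain c where c: "c \<in> C'" "u \<in> ball c (\<delta> c / 2)" using C' u by blast
    have "\<epsilon> \<le> \<delta> c / 2" unfolding \<epsilon>_def using c C' by (intro Min_le) auto
    then have "dist c w < \<delta> c" using c uw dist_triangle[of c w u] by simp
    then have "w \<in> ball c (\<delta> c)" by simp
    moreover have "u \<in> ball c (\<delta> c)" using c \<delta>[of c] by simp
    ultimately have "inner (g w - g u) (w - u) \<ge> \<mu>l c * (norm (w - u))\<^sup>2" by (rule \<mu>l')
    moreover have "m1 \<le> \<mu>l c" unfolding m1_def using c C' by (intro Min_le) auto
    ultimately show ?thesis by (meson order_trans mult_right_mono zero_le_power2)
  qed
  define m where "m = min m1 (m1 * \<epsilon> / (4 * R))"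
  have m: "m > 0" unfolding m_def using m1 \<epsilon> R by simp
  have "inner (g v - g u) (v - u) \<ge> m * (norm (v - u))\<^sup>2" if u: "u \<in> K" and v: "v \<in> K" for u v
  proof (cases "norm (v - u) < \<epsilon>")
    case True
    then have "dist u v < \<epsilon>" by (simp add: dist_norm norm_minus_commute)
    from U[OF u v this] have "inner (g v - g u) (v - u) \<ge> m1 * (norm (v - u))\<^sup>2" .
    moreover have "m \<le> m1" by (simp add: m_def)
    ultimately show ?thesis by (meson order_trans mult_right_mono zero_le_power2)
  next
    case False
    define n where "n = norm (v - u)"
    have n: "n \<ge> \<epsilon>" "n > 0" using False \<epsilon> by (auto simp: n_def)
    have n2: "n \<le> 2 * R"
    proof -
      have "n \<le> norm v + norm u" unfolding n_def by (rule norm_triangle_ineq4)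
      then show ?thesis using u v by (simp add: K_def)
    qed
    define s where "s = \<epsilon> / (2 * n)"
    have s: "0 < s" "s < 1" using n \<epsilon> by (auto simp: s_def field_simps)
    define w where "w = u + s *\<^sub>R (v - u)"
    have wK: "w \<in> K"
    proof -
      have "w = (1 - s) *\<^sub>R u + s *\<^sub>R v" by (simp add: w_def algebra_simps)
      then show ?thesis using convexD[OF convex_cball[of 0 R], of u v "1 - s" s] u v s
        by (simp add: K_def)
    qed
    have wu: "w - u = s *\<^sub>R (v - u)" by (simp add: w_def)
    have vw: "v - w = (1 - s) *\<^sub>R (v - u)" by (simp add: w_def algebra_simps)
    have "dist u w = norm (w - u)" by (simp add: dist_norm norm_minus_commute)
    also have "\<dots> = s * n" unfolding wu n_def using s by simp
    also have "\<dots> = \<epsilon> / 2" using n by (simp add: s_def)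
    finally have "dist u w < \<epsilon>" using \<epsilon> by simp
    from U[OF u wK this] have "s * inner (g w - g u) (v - u) \<ge> m1 * (s\<^sup>2 * n\<^sup>2)"
      unfolding wu using s by (simp add: n_def power_mult_distrib)
    then have A: "inner (g w - g u) (v - u) \<ge> m1 * s * n\<^sup>2"
      using s by (simp add: power2_eq_square field_simps) 
    have "inner (g v - g w) (v - w) \<ge> 0" by (rule grad_mono[OF grad cvx])
    then have B: "inner (g v - g w) (v - u) \<ge> 0" unfolding vw using s
      by (simp add: zero_le_mult_iff)
    have "inner (g v - g u) (v - u) = inner (g v - g w) (v - u) + inner (g w - g u) (v - u)"
      by (simp add: inner_diff_left)
    then have C: "inner (g v - g u) (v - u) \<ge> m1 * s * n\<^sup>2" using A B by linarith
    have "m1 * s * n\<^sup>2 = m1 * \<epsilon> / 2 * n" using n by (simp add: s_def power2_eq_square)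
    also have "\<dots> \<ge> m1 * \<epsilon> / (4 * R) * n\<^sup>2"
    proof -
      have "n\<^sup>2 / (4 * R) \<le> n / 2" using n n2 R by (simp add: power2_eq_square field_simps mult_right_mono)
      from mult_left_mono[OF this, of "m1 * \<epsilon>"] m1 \<epsilon> show ?thesis by (simp add: field_simps)
    qed
    finally have "inner (g v - g u) (v - u) \<ge> m1 * \<epsilon> / (4 * R) * n\<^sup>2" using C by linarith
    moreover have "m \<le> m1 * \<epsilon> / (4 * R)" by (simp add: m_def)
    ultimately show ?thesis unfolding n_def by (meson order_trans mult_right_mono zero_le_power2)
  qed
  with m show ?thesis unfolding K_def by blast
qed

lemma norm_sq_diff_scale:
  fixes u v :: "'a::real_inner"
  shows "(norm (u - c *\<^sub>R v))\<^sup>2 = (norm u)\<^sup>2 - 2 * c * inner u v + c\<^sup>2 * (norm v)\<^sup>2"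
  unfolding power2_norm_eq_inner
  by (simp add: inner_diff_left inner_diff_right inner_commute power2_eq_square algebra_simps)



theorem theorem3p16:
  fixes f :: "'a::euclidean_space \<Rightarrow> real" and g :: "'a \<Rightarrow> 'a"
    and x :: "nat \<Rightarrow> 'a" and \<alpha> :: "nat \<Rightarrow> real"
    and xs :: 'a and r L \<mu> \<alpha>bar q0 q1 :: real and \<Omega> :: "'a set"
  assumes grad: "\<And>y. GDERIV f y :> g y"
    and cont_grad: "continuous_on UNIV g"
    and lip_grad: "loc_lipschitz_map g"
    and cvx: "convex_on UNIV f"
    and lsc: "loc_strongly_convex f g"
    and xs_opt: "\<And>y. f xs \<le> f y"
    and bdd: "bounded {y. f y \<le> f (x 0)}"
    and r_max: "r \<in> norm ` {y. f y \<le> f (x 0)}" "\<And>y. f y \<le> f (x 0) \<Longrightarrow> norm y \<le> r"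
    and Omega: "\<Omega> = cball 0 (5 * r)"
    and L_pos: "L > 0"
    and L_lip: "\<And>y z. y \<in> \<Omega> \<Longrightarrow> z \<in> \<Omega> \<Longrightarrow> norm (g y - g z) \<le> L * norm (y - z)"
    and mu_def: "\<mu> = Inf {inner (g v - g u) (v - u) / (norm (v - u))\<^sup>2 | u v. u \<in> \<Omega> \<and> v \<in> \<Omega> \<and> u \<noteq> v}"
    and mu_L: "\<mu> < L"
    and abar: "0 < \<alpha>bar" "\<alpha>bar < 1 / L"
    and steps: "\<And>k. \<alpha> k \<in> {\<alpha>bar .. 1 / L}"
    and iter: "\<And>k. x (Suc k) = x k - \<alpha> k *\<^sub>R g (x k)"
    and q0_def: "q0 = 2 * \<alpha>bar * \<mu> * L / (\<mu> + L)"
    and q1_def: "q1 = \<mu>\<^sup>2 * \<alpha>bar\<^sup>2 / 4"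
  shows "(\<forall>k. (norm (x (Suc k) - xs))\<^sup>2 \<le> (1 - q0) * (norm (x k - xs))\<^sup>2
              \<and> f (x (Suc k)) - f xs \<le> (1 - q1) * (f (x k) - f xs))
       \<and> (\<forall>k. norm (g (x k)) \<le> sqrt 2 * L / sqrt \<mu> * sqrt (f (x 0) - f xs) * sqrt ((1 - q1) ^ k))"
proof -
  have gxs: "g xs = 0"
  proof -
    have d: "(f has_derivative (\<lambda>h. inner h (g xs))) (at xs)"
      using grad[of xs] by (simp add: gderiv_def)
    have "(\<lambda>h. inner h (g xs)) = (\<lambda>h. 0)"
      by (rule has_derivative_local_min[OF d]) (simp add: xs_opt)
    then have "inner (g xs) (g xs) = 0" by metis
    then show ?thesis by simp
  qed
  have r0: "r \<ge> 0" using r_max(1) by auto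
  have xs_r: "norm xs \<le> r" using r_max(2) xs_opt by blast
  show ?thesis
  proof (cases "r = 0")
    case True
    have z: "y = 0" if "f y \<le> f (x 0)" for y using r_max(2)[OF that] True by simp
    have xs0: "xs = 0" using z xs_opt by blast
    have xk: "x k = xs" for k
    proof (induction k)
      case 0
      then show ?case using z[of "x 0"] xs0 by simp
    next
      case (Suc k)
      then show ?case using iter[of k] gxs by simp
    qed
    show ?thesis by (simp add: xk gxs)
  next
    case False
    with r0 have rpos: "r > 0" by simp
    obtain m0 where m0: "m0 > 0" and m0': "\<And>u v. u \<in> cball 0 (5 * r) \<Longrightarrow> v \<in> cball 0 (5 * r) \<Longrightarrow>
        inner (g v - g u) (v - u) \<ge> m0 * (norm (v - u))\<^sup>2"
      using unif_pos[OF grad cvx lsc, of "5 * r"] rpos by auto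
    define QS where "QS = {inner (g v - g u) (v - u) / (norm (v - u))\<^sup>2 | u v. u \<in> \<Omega> \<and> v \<in> \<Omega> \<and> u \<noteq> v}"
    have QS_lb: "q \<ge> m0" if qQ: "q \<in> QS" for q
    proof -
      obtain u v where uv: "u \<in> \<Omega>" "v \<in> \<Omega>" "u \<noteq> v" and q: "q = inner (g v - g u) (v - u) / (norm (v - u))\<^sup>2"
        using qQ unfolding QS_def by blast
      have "(norm (v - u))\<^sup>2 > 0" using uv by simp
      with m0'[of u v] uv Omega show ?thesis unfolding q by (simp add: field_simps)
    qed
    have QS_ne: "QS \<noteq> {}"
    proof -
      obtain v :: 'a where v: "norm v = 5 * r" using vector_choose_size[of "5 * r"] rpos by auto
      have vn: "v \<noteq> 0" using v rpos by auto
      have "inner (g v - g 0) (v - 0) / (norm (v - 0))\<^sup>2 \<in> QS"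
        unfolding QS_def mem_Collect_eq
        apply (rule exI[of _ "0::'a"], rule exI[of _ v]) using v rpos Omega vn by simp
      then show ?thesis by blast
    qed
    have mu_QS: "\<mu> = Inf QS" unfolding mu_def QS_def ..
    have mu_m0: "\<mu> \<ge> m0" unfolding mu_QS by (rule cInf_greatest[OF QS_ne QS_lb])
    have mupos: "\<mu> > 0" using mu_m0 m0 by simp
    have mu_low: "inner (g v - g u) (v - u) \<ge> \<mu> * (norm (v - u))\<^sup>2" if "u \<in> \<Omega>" "v \<in> \<Omega>" for u v
    proof (cases "u = v")
      case True then show ?thesis by simp
    next
      case False
      then have "inner (g v - g u) (v - u) / (norm (v - u))\<^sup>2 \<in> QS" unfolding QS_def using that by blast
      then have "\<mu> \<le> inner (g v - g u) (v - u) / (norm (v - u))\<^sup>2"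
        unfolding mu_QS by (rule cInf_lower) (use QS_lb in \<open>meson bdd_belowI\<close>)
      moreover have "(norm (v - u))\<^sup>2 > 0" using False by simp
      ultimately show ?thesis by (simp add: field_simps)
    qed
    have cvxO: "convex \<Omega>" unfolding Omega by simp
    have seg: "u + t *\<^sub>R (w - u) \<in> \<Omega>" if "u \<in> \<Omega>" "w \<in> \<Omega>" "0 \<le> t" "t \<le> 1" for u w t
    proof -
      have "u + t *\<^sub>R (w - u) = (1 - t) *\<^sub>R u + t *\<^sub>R w" by (simp add: algebra_simps)
      then show ?thesis using convexD[OF cvxO, of u w "1 - t" t] that by simp
    qed
    have flow: "f w \<ge> f u + inner (g u) (w - u) + \<mu> / 2 * (norm (w - u))\<^sup>2" if "u \<in> \<Omega>" "w \<in> \<Omega>" for u w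
    proof (rule quad_lower[OF grad])
      fix t :: real assume t: "0 \<le> t" "t \<le> 1"
      define p where "p = u + t *\<^sub>R (w - u)"
      have pO: "p \<in> \<Omega>" unfolding p_def using seg that t by blast
      have pu: "p - u = t *\<^sub>R (w - u)" by (simp add: p_def)
      have "inner (g p - g u) (p - u) \<ge> \<mu> * (norm (p - u))\<^sup>2" by (rule mu_low[OF that(1) pO])
      then have "inner (g p - g u) (t *\<^sub>R (w - u)) \<ge> \<mu> * (norm (t *\<^sub>R (w - u)))\<^sup>2" by (simp only: pu)
      then have "t * inner (g p - g u) (w - u) \<ge> \<mu> * (t\<^sup>2 * (norm (w - u))\<^sup>2)"
        by (simp only: inner_scaleR_right norm_scaleR power_mult_distrib power2_abs)
      then have "t * inner (g p - g u) (w - u) \<ge> t * (\<mu> * t * (norm (w - u))\<^sup>2)"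
        by (simp add: power2_eq_square algebra_simps)
      then show "inner (g (u + t *\<^sub>R (w - u)) - g u) (w - u) \<ge> \<mu> * t * (norm (w - u))\<^sup>2"
      proof (cases "t = 0")
        case True then show ?thesis by simp
      next
        case False
        with t have "t > 0" by simp
        with \<open>t * _ \<ge> t * _\<close> show ?thesis unfolding p_def by (simp add: mult_le_cancel_left_pos)
      qed
    qed
    have fup: "f w \<le> f u + inner (g u) (w - u) + L / 2 * (norm (w - u))\<^sup>2" if "u \<in> \<Omega>" "w \<in> \<Omega>" for u w
    proof (rule quad_upper[OF grad])
      fix t :: real assume t: "0 \<le> t" "t \<le> 1"
      define p where "p = u + t *\<^sub>R (w - u)"
      have pO: "p \<in> \<Omega>" unfolding p_def using seg that t by blast
      have "inner (g p - g u) (w - u) \<le> norm (g p - g u) * norm (w - u)" by (rule norm_cauchy_schwarz)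
      also have "\<dots> \<le> L * norm (p - u) * norm (w - u)"
        using L_lip[OF pO that(1)] by (simp add: mult_right_mono)
      also have "\<dots> = L * t * (norm (w - u))\<^sup>2" using t by (simp add: p_def power2_eq_square)
      finally show "inner (g (u + t *\<^sub>R (w - u)) - g u) (w - u) \<le> L * t * (norm (w - u))\<^sup>2"
        unfolding p_def .
    qed
    define \<psi> where "\<psi> z = f z - \<mu> / 2 * inner z z" for z
    define d where "d z = g z - \<mu> *\<^sub>R z" for z
    have psi_low: "\<psi> w \<ge> \<psi> u + inner (d u) (w - u)" if "u \<in> \<Omega>" "w \<in> \<Omega>" for u w
    proof -
      have e: "(norm (w - u))\<^sup>2 = inner w w - 2 * inner u w + inner u u"
        by (simp add: power2_norm_eq_inner inner_diff_left inner_diff_right inner_commute)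
      show ?thesis using flow[OF that] unfolding \<psi>_def d_def e
        by (simp add: inner_diff_left inner_diff_right inner_commute algebra_simps)
    qed
    have psi_up: "\<psi> w \<le> \<psi> u + inner (d u) (w - u) + (L - \<mu>) / 2 * (norm (w - u))\<^sup>2" if "u \<in> \<Omega>" "w \<in> \<Omega>" for u w
    proof -
      have e: "(norm (w - u))\<^sup>2 = inner w w - 2 * inner u w + inner u u"
        by (simp add: power2_norm_eq_inner inner_diff_left inner_diff_right inner_commute)
      show ?thesis using fup[OF that] unfolding \<psi>_def d_def e
        by (simp add: inner_diff_left inner_diff_right inner_commute field_simps)
    qed
    have xsO: "xs \<in> \<Omega>" using xs_r rpos Omega by simp
    have mu_ab: "\<mu> * \<alpha>bar \<le> 1"
    proof -
      have "\<mu> * \<alpha>bar \<le> L * \<alpha>bar" using mu_L abar by (simp add: mult_right_mono)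
      also have "\<dots> \<le> 1" using abar L_pos by (simp add: field_simps)
      finally show ?thesis .
    qed
    have q1_le: "q1 \<le> \<mu> * \<alpha>bar"
    proof -
      have "q1 = (\<mu> * \<alpha>bar) * (\<mu> * \<alpha>bar) / 4" by (simp add: q1_def power2_eq_square)
      also have "\<dots> \<le> (\<mu> * \<alpha>bar) * 1 / 4"
        using mu_ab mupos abar by (intro divide_right_mono mult_left_mono) auto
      also have "\<dots> \<le> \<mu> * \<alpha>bar" using mupos abar by simp
      finally show ?thesis .
    qed
    have step: "f y' \<le> f y \<and> (norm (y' - xs))\<^sup>2 \<le> (1 - q0) * (norm (y - xs))\<^sup>2
        \<and> f y' - f xs \<le> (1 - q1) * (f y - f xs)"
      if yL: "f y \<le> f (x 0)" and a: "a \<in> {\<alpha>bar..1/L}" and y': "y' = y - a *\<^sub>R g y" for y y' a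
    proof -
      have yr: "norm y \<le> r" using r_max(2)[OF yL] .
      have yO: "y \<in> \<Omega>" using yr rpos Omega by simp
      define D where "D = norm (y - xs)"
      define N where "N = (norm (g y))\<^sup>2"
      define p where "p = inner (g y) (y - xs)"
      have D0: "D \<ge> 0" by (simp add: D_def)
      have N0: "N \<ge> 0" by (simp add: N_def)
      have D2r: "D \<le> 2 * r" using norm_triangle_ineq4[of y xs] yr xs_r by (simp add: D_def)
      have gL: "norm (g y) \<le> L * D" using L_lip[OF yO xsO] gxs by (simp add: D_def)
      have a0: "a > 0" "a \<le> 1 / L" "a \<ge> \<alpha>bar" using a abar by auto
      have aL: "a * L \<le> 1" using a0 L_pos by (simp add: field_simps)
      have agD: "a * norm (g y) \<le> D"
      proof -
        have "a * norm (g y) \<le> a * (L * D)" using gL a0 by (simp add: mult_left_mono)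
        also have "\<dots> = (a * L) * D" by simp
        also have "\<dots> \<le> 1 * D" using aL D0 by (intro mult_right_mono) auto
        finally show ?thesis by simp
      qed
      have y'O: "y' \<in> \<Omega>"
      proof -
        have "norm y' \<le> norm y + norm (a *\<^sub>R g y)" unfolding y' by (rule norm_triangle_ineq4)
        also have "\<dots> = norm y + a * norm (g y)" using a0 by simp
        finally have "norm y' \<le> 5 * r" using agD D2r yr rpos by linarith
        then show ?thesis using Omega by simp
      qed
      have desc: "f y' \<le> f y - \<alpha>bar / 2 * N"
      proof -
        have "f y' \<le> f y + inner (g y) (y' - y) + L / 2 * (norm (y' - y))\<^sup>2" by (rule fup[OF yO y'O])
        also have "inner (g y) (y' - y) = - a * N" by (simp add: y' N_def power2_norm_eq_inner)
        also have "(norm (y' - y))\<^sup>2 = a\<^sup>2 * N" using a0 by (simp add: y' N_def power_mult_distrib)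
        also have "L / 2 * (a\<^sup>2 * N) \<le> a / 2 * N"
        proof -
          have "L * a\<^sup>2 = (a * L) * a" by (simp add: power2_eq_square)
          also have "\<dots> \<le> 1 * a" using aL a0 by (intro mult_right_mono) auto
          finally have "L * a\<^sup>2 \<le> a" by simp
          then show ?thesis using N0 by (simp add: mult_right_mono mult.assoc[symmetric])
        qed
        moreover have "\<alpha>bar * N \<le> a * N" using a0 N0 by (simp add: mult_right_mono)
        ultimately show ?thesis by linarith
      qed
      have PL: "2 * \<mu> * (f y - f xs) \<le> N"
      proof -
        have "f xs \<ge> f y + inner (g y) (xs - y) + \<mu> / 2 * (norm (xs - y))\<^sup>2" by (rule flow[OF yO xsO])
        moreover have "inner (g y) (xs - y) = - p" by (simp add: p_def inner_diff_right)
        moreover have "norm (xs - y) = D" by (simp add: D_def norm_minus_commute)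
        ultimately have A: "f y - f xs \<le> p - \<mu> / 2 * D\<^sup>2" by simp
        have "p \<le> norm (g y) * D" unfolding p_def D_def by (rule norm_cauchy_schwarz)
        with A have "2 * \<mu> * (f y - f xs) \<le> 2 * \<mu> * (norm (g y) * D - \<mu> / 2 * D\<^sup>2)"
          using mupos by (intro mult_left_mono) auto
        also have "\<dots> \<le> N"
        proof -
          have "0 \<le> (norm (g y) - \<mu> * D)\<^sup>2" by simp
          then show ?thesis by (simp add: N_def power2_eq_square algebra_simps)
        qed
        finally show ?thesis .
      qed
      have fpart: "f y' - f xs \<le> (1 - q1) * (f y - f xs)"
      proof -
        have E0: "f y - f xs \<ge> 0" using xs_opt[of y] by simp
        have "\<alpha>bar * (2 * \<mu> * (f y - f xs)) \<le> \<alpha>bar * N" using PL abar by (intro mult_left_mono) auto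
        then have "f y' - f xs \<le> (1 - \<mu> * \<alpha>bar) * (f y - f xs)" using desc by (simp add: algebra_simps)
        also have "\<dots> \<le> (1 - q1) * (f y - f xs)" using q1_le E0 by (intro mult_right_mono) auto
        finally show ?thesis .
      qed
      define G where "G = d y - d xs"
      have G_eq: "G = g y - \<mu> *\<^sub>R (y - xs)" by (simp add: G_def d_def gxs algebra_simps)
      define l where "l = L - \<mu>"
      have lpos: "l > 0" using mu_L by (simp add: l_def)
      have coc: "(2 * t - l * t\<^sup>2) * (norm G)\<^sup>2 \<le> inner G (y - xs)"
        if "t \<ge> 0" "t * norm G \<le> 2 * D" for t
      proof (rule cocoerc_step[of \<Omega> \<psi> d l y xs G t])
        show "y - t *\<^sub>R G \<in> \<Omega>"
        proof -
          have "norm (y - t *\<^sub>R G) \<le> norm y + norm (t *\<^sub>R G)" by (rule norm_triangle_ineq4)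
          also have "\<dots> = norm y + t * norm G" using that by simp
          finally show ?thesis using that yr D2r Omega by simp
        qed
        show "xs + t *\<^sub>R G \<in> \<Omega>"
        proof -
          have "norm (xs + t *\<^sub>R G) \<le> norm xs + norm (t *\<^sub>R G)" by (rule norm_triangle_ineq)
          also have "\<dots> = norm xs + t * norm G" using that by simp
          finally show ?thesis using that xs_r D2r Omega by simp
        qed
      qed (use psi_low psi_up yO xsO G_def l_def in auto)
      have CS: "inner G (y - xs) \<le> norm G * D" unfolding D_def by (rule norm_cauchy_schwarz)
      have key: "(norm G)\<^sup>2 \<le> l * inner G (y - xs)"
      proof (cases "norm G \<le> 2 * l * D")
        case True
        have "1 / l * norm G \<le> 2 * D" using True lpos by (simp add: field_simps)
        from coc[OF _ this] lpos have "(2 * (1 / l) - l * (1 / l)\<^sup>2) * (norm G)\<^sup>2 \<le> inner G (y - xs)" by simp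
        moreover have "2 * (1 / l) - l * (1 / l)\<^sup>2 = 1 / l" using lpos by (simp add: power2_eq_square field_simps)
        ultimately have "(norm G)\<^sup>2 / l \<le> inner G (y - xs)" by simp
        then show ?thesis using lpos by (simp add: divide_le_eq mult.commute)
      next
        case False
        then have nG: "norm G > 2 * l * D" by simp
        have Dpos: "D > 0"
        proof (rule ccontr)
          assume "\<not> D > 0"
          then have "y = xs" using D0 by (simp add: D_def)
          then have "G = 0" by (simp add: G_eq gxs)
          moreover have "D * l \<ge> 0" using D0 lpos by simp
          ultimately show False using nG by (simp add: mult.commute)
        qed
        have "2 * l * D > 0" using lpos Dpos by simp
        then have nG0: "norm G > 0" using nG by linarith
        define t where "t = 2 * D / norm G"
        have t0: "t \<ge> 0" using Dpos nG0 by (simp add: t_def)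
        have tG: "t * norm G = 2 * D" using nG0 by (simp add: t_def)
        from coc[OF t0] tG have "(2 * t - l * t\<^sup>2) * (norm G)\<^sup>2 \<le> inner G (y - xs)" by simp
        moreover have "(2 * t - l * t\<^sup>2) * (norm G)\<^sup>2 = 4 * D * norm G - 4 * l * D\<^sup>2"
          using nG0 by (simp add: t_def power2_eq_square field_simps)
        ultimately have "4 * D * norm G - 4 * l * D\<^sup>2 \<le> norm G * D" using CS by linarith
        then have "D * (3 * norm G) \<le> D * (4 * l * D)" by (simp add: power2_eq_square algebra_simps)
        then have "3 * norm G \<le> 4 * l * D" using Dpos by simp
        moreover have "l * D > 0" using lpos Dpos by simp
        ultimately show ?thesis using nG by linarith
      qed
      have e1: "inner G (y - xs) = p - \<mu> * D\<^sup>2"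
        by (simp add: G_eq p_def D_def inner_diff_left power2_norm_eq_inner)
      have e2: "(norm G)\<^sup>2 = N - 2 * \<mu> * p + \<mu>\<^sup>2 * D\<^sup>2"
        unfolding G_eq norm_sq_diff_scale p_def D_def N_def by (simp add: inner_commute)
      have coc2: "(L + \<mu>) * p \<ge> N + \<mu> * L * D\<^sup>2"
        using key unfolding e1 e2 l_def by (simp add: power2_eq_square algebra_simps)
      have e3: "(norm (y' - xs))\<^sup>2 = D\<^sup>2 - 2 * a * p + a\<^sup>2 * N"
      proof -
        have e: "y' - xs = (y - xs) - a *\<^sub>R g y" by (simp add: y')
        show ?thesis unfolding e norm_sq_diff_scale p_def D_def N_def by (simp add: inner_commute)
      qed
      have Lm: "L + \<mu> > 0" using L_pos mupos by simp
      have "(L + \<mu>) * (2 * a * p - a\<^sup>2 * N) \<ge> 2 * \<alpha>bar * \<mu> * L * D\<^sup>2"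
      proof -
        have "(L + \<mu>) * (2 * a * p - a\<^sup>2 * N) = 2 * a * ((L + \<mu>) * p) - (L + \<mu>) * a\<^sup>2 * N"
          by (simp add: algebra_simps)
        also have "\<dots> \<ge> 2 * a * (N + \<mu> * L * D\<^sup>2) - (L + \<mu>) * a\<^sup>2 * N"
          using coc2 a0 by (simp add: mult_left_mono)
        finally have A: "(L + \<mu>) * (2 * a * p - a\<^sup>2 * N) \<ge> a * N * (2 - (L + \<mu>) * a) + 2 * a * \<mu> * L * D\<^sup>2"
          by (simp add: power2_eq_square algebra_simps)
        have "(L + \<mu>) * a \<le> 2 * L * a" using mu_L a0 by (simp add: mult_right_mono)
        also have "\<dots> \<le> 2" using aL by (simp add: algebra_simps)
        finally have "a * N * (2 - (L + \<mu>) * a) \<ge> 0" using a0 N0 by simp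
        moreover have "2 * a * \<mu> * L * D\<^sup>2 \<ge> 2 * \<alpha>bar * \<mu> * L * D\<^sup>2"
          using a0 mupos L_pos by (intro mult_right_mono) auto
        ultimately show ?thesis using A by linarith
      qed
      then have "2 * a * p - a\<^sup>2 * N \<ge> q0 * D\<^sup>2"
        using Lm unfolding q0_def by (simp add: field_simps)
      then have dpart: "(norm (y' - xs))\<^sup>2 \<le> (1 - q0) * (norm (y - xs))\<^sup>2"
        unfolding e3 D_def[symmetric] by (simp add: algebra_simps)
      have "\<alpha>bar / 2 * N \<ge> 0" using abar N0 by simp
      then show ?thesis using desc fpart dpart by linarith
    qed
    have xL: "f (x k) \<le> f (x 0)" for k
    proof (induction k)
      case 0 then show ?case by simp
    next
      case (Suc k)
      then show ?case using step[OF Suc steps[of k] iter[of k]] by linarith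
    qed
    have partA: "\<forall>k. (norm (x (Suc k) - xs))\<^sup>2 \<le> (1 - q0) * (norm (x k - xs))\<^sup>2
              \<and> f (x (Suc k)) - f xs \<le> (1 - q1) * (f (x k) - f xs)"
      using step[OF xL steps iter] by blast
    have q1le1: "1 - q1 \<ge> 0" using q1_le mu_ab by linarith
    have fk: "f (x k) - f xs \<le> (1 - q1) ^ k * (f (x 0) - f xs)" for k
    proof (induction k)
      case 0 then show ?case by simp
    next
      case (Suc k)
      have "f (x (Suc k)) - f xs \<le> (1 - q1) * (f (x k) - f xs)" using partA by blast
      also have "\<dots> \<le> (1 - q1) * ((1 - q1) ^ k * (f (x 0) - f xs))"
        using Suc q1le1 by (intro mult_left_mono) auto
      finally show ?case by simp
    qed
    have partB: "norm (g (x k)) \<le> sqrt 2 * L / sqrt \<mu> * sqrt (f (x 0) - f xs) * sqrt ((1 - q1) ^ k)" for k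
    proof -
      define y where "y = x k"
      define D where "D = norm (y - xs)"
      have yO: "y \<in> \<Omega>" using r_max(2)[OF xL[of k]] rpos Omega by (simp add: y_def)
      have gL: "norm (g y) \<le> L * D" using L_lip[OF yO xsO] gxs by (simp add: D_def)
      have "f y \<ge> f xs + inner (g xs) (y - xs) + \<mu> / 2 * D\<^sup>2" unfolding D_def by (rule flow[OF xsO yO])
      then have fD: "\<mu> / 2 * D\<^sup>2 \<le> f y - f xs" using gxs by simp
      have "(norm (g y))\<^sup>2 \<le> (L * D)\<^sup>2" using gL by (intro power_mono) auto
      also have "\<dots> = L\<^sup>2 * (2 / \<mu>) * (\<mu> / 2 * D\<^sup>2)" using mupos by (simp add: power_mult_distrib)
      also have "\<dots> \<le> L\<^sup>2 * (2 / \<mu>) * (f y - f xs)" using fD mupos by (intro mult_left_mono) auto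
      also have "\<dots> \<le> L\<^sup>2 * (2 / \<mu>) * ((1 - q1) ^ k * (f (x 0) - f xs))"
        using fk[of k] mupos unfolding y_def by (intro mult_left_mono) auto
      also have "\<dots> = 2 * L\<^sup>2 / \<mu> * (f (x 0) - f xs) * (1 - q1) ^ k"
        by (simp only: mult_ac times_divide_eq_right times_divide_eq_left)
      finally have A: "(norm (g y))\<^sup>2 \<le> 2 * L\<^sup>2 / \<mu> * (f (x 0) - f xs) * (1 - q1) ^ k" .
      have "norm (g y) = sqrt ((norm (g y))\<^sup>2)" by simp
      also have "\<dots> \<le> sqrt (2 * L\<^sup>2 / \<mu> * (f (x 0) - f xs) * (1 - q1) ^ k)"
        using A by (rule real_sqrt_le_mono)
      also have "\<dots> = sqrt 2 * L / sqrt \<mu> * sqrt (f (x 0) - f xs) * sqrt ((1 - q1) ^ k)"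
        using L_pos by (simp add: real_sqrt_mult real_sqrt_divide)
      finally show ?thesis by (simp add: y_def)
    qed
    show ?thesis using partA partB by blast
  qed
qed

end
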